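(* Let $n \ge 2$, $k \ge 1$ and $n_i, m_i \in \mathbb{Z}\setminus\{0\}$ for $1 \le i \le k$, and let $G$ be the group presented by $\mathcal{P}_n(n_1,\dots,n_k;m_1,\dots,m_k)$. Then: (i) if $N$ denotes the normal subgroup of $G$ generated by $xyxy^{-1}$, there is a group isomorphism $G/N \cong Q_{4n}$ sending $x \mapsto x$, $y \mapsto y$; (ii) the abelianisations satisfy $G^{\mathrm{ab}} \cong Q_{4n}^{\mathrm{ab}}$.
   Context: $Q_{4n} = \langle x, y \mid x^n y^{-2}, xyxy^{-1} \rangle$. With $n_{k+1} = 1 - \sum_{i=1}^k n_i$, $m_{k+1} = 1 - \sum_{i=1}^k m_i$, $\mathcal{P}_n(n_1,\dots,n_k;m_1,\dots,m_k) = \langle x, y \mid x^n y^{-2},\ x^{n_1} y x^{m_1} y^{-1} \cdots x^{n_{k+1}} y x^{m_{k+1}} y^{-1} \rangle$. *)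

theory Defs
  imports "HOL-Algebra.Algebra"
begin

(* Group presentations: letters are (inverted?, generator); words are lists of letters. *)
type_synonym 'a word = "(bool \<times> 'a) list"

definition inv_letter :: "bool \<times> 'a \<Rightarrow> bool \<times> 'a" where
  "inv_letter l = (\<not> fst l, snd l)"

definition pres_step :: "'a word set \<Rightarrow> ('a word \<times> 'a word) set" where
  "pres_step R = {(u @ [l, inv_letter l] @ v, u @ v) | u l v. True}
              \<union> {(u @ r @ v, u @ v) | u r v. r \<in> R}"

definition pres_eq :: "'a word set \<Rightarrow> ('a word \<times> 'a word) set" where
  "pres_eq R = (pres_step R \<union> (pres_step R)\<inverse>)\<^sup>*"

definition pres_word :: "'a word set \<Rightarrow> 'a word \<Rightarrow> 'a word set" where
  "pres_word R w = pres_eq R `` {w}"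

(* the group presented by all generators of type 'a and relators R *)
definition presented_group :: "'a word set \<Rightarrow> 'a word set monoid" where
  "presented_group R =
     \<lparr> carrier = UNIV // pres_eq R,
       monoid.mult = (\<lambda>A B. pres_word R ((SOME a. a \<in> A) @ (SOME b. b \<in> B))),
       monoid.one = pres_word R [] \<rparr>"

definition normal_closure :: "('a, 'b) monoid_scheme \<Rightarrow> 'a set \<Rightarrow> 'a set" where
  "normal_closure G S =
     generate G {g \<otimes>\<^bsub>G\<^esub> s \<otimes>\<^bsub>G\<^esub> inv\<^bsub>G\<^esub> g | g s. g \<in> carrier G \<and> s \<in> S}"

datatype gen = GX | GY

definition xw :: "gen word" where "xw = [(False, GX)]"
definition yw :: "gen word" where "yw = [(False, GY)]"
definition yinvw :: "gen word" where "yinvw = [(True, GY)]"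

definition pow_word :: "gen \<Rightarrow> int \<Rightarrow> gen word" where
  "pow_word a z = (if 0 \<le> z then replicate (nat z) (False, a) else replicate (nat (- z)) (True, a))"

(* relators of Q_{4n} = <x, y | x^n y^{-2}, x y x y^{-1}> *)
definition Q_rels :: "nat \<Rightarrow> gen word set" where
  "Q_rels n = {pow_word GX (int n) @ pow_word GY (-2), xw @ yw @ xw @ yinvw}"

definition P_rels :: "nat \<Rightarrow> int list \<Rightarrow> int list \<Rightarrow> gen word set" where
  "P_rels n ns ms =
     (let ns' = ns @ [1 - sum_list ns]; ms' = ms @ [1 - sum_list ms] in
      {pow_word GX (int n) @ pow_word GY (-2),
       concat (map (\<lambda>(a, b). pow_word GX a @ yw @ pow_word GX b @ yinvw) (zip ns' ms'))})"

end

theory Submission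
  imports Defs
begin


lemma pres_step_ctx:
  assumes "(u, v) \<in> pres_step R" shows "(p @ u @ q, p @ v @ q) \<in> pres_step R"
proof -
  from assms consider (a) a l b where "u = a @ [l, inv_letter l] @ b" "v = a @ b"
    | (b) a r b where "u = a @ r @ b" "v = a @ b" "r \<in> R"
    unfolding pres_step_def by blast
  then show ?thesis
  proof cases
    case a
    then have "(p @ u @ q, p @ v @ q) = ((p @ a) @ [l, inv_letter l] @ (b @ q), (p @ a) @ (b @ q))" by simp
    then show ?thesis unfolding pres_step_def by blast
  next
    case b
    then have "(p @ u @ q, p @ v @ q) = ((p @ a) @ r @ (b @ q), (p @ a) @ (b @ q))" by simp
    then show ?thesis using b(3) unfolding pres_step_def by blast
  qed
qed

lemma pres_eq_equiv: "equiv UNIV (pres_eq R)"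
  unfolding pres_eq_def
  by (rule equivI) (auto simp: refl_rtrancl sym_rtrancl sym_Un_converse trans_rtrancl)

lemma pres_eq_ctx:
  assumes "(u, v) \<in> pres_eq R" shows "(p @ u @ q, p @ v @ q) \<in> pres_eq R"
  using assms unfolding pres_eq_def
proof (induction rule: rtrancl_induct)
  case base then show ?case by simp
next
  case (step y z)
  from step(2) have "(p @ y @ q, p @ z @ q) \<in> pres_step R \<union> (pres_step R)\<inverse>"
    using pres_step_ctx by blast
  with step(3) show ?case by (rule rtrancl_into_rtrancl)
qed

lemma pres_eq_trans: "(a, b) \<in> pres_eq R \<Longrightarrow> (b, c) \<in> pres_eq R \<Longrightarrow> (a, c) \<in> pres_eq R"
  using pres_eq_equiv[of R] unfolding equiv_def trans_def by blast

lemma pres_eq_sym: "(a, b) \<in> pres_eq R \<Longrightarrow> (b, a) \<in> pres_eq R"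
  using pres_eq_equiv[of R] unfolding equiv_def sym_def by blast

lemma pres_eq_refl[simp]: "(a, a) \<in> pres_eq R"
  unfolding pres_eq_def by simp

lemma pres_eq_app:
  "(u, u') \<in> pres_eq R \<Longrightarrow> (v, v') \<in> pres_eq R \<Longrightarrow> (u @ v, u' @ v') \<in> pres_eq R"
  using pres_eq_ctx[of u u' R "[]" v] pres_eq_ctx[of v v' R u' "[]"] pres_eq_trans by force

lemma pres_word_eq_iff: "pres_word R u = pres_word R v \<longleftrightarrow> (u, v) \<in> pres_eq R"
  unfolding pres_word_def using eq_equiv_class_iff[OF pres_eq_equiv] by blast

lemma pres_word_mem: "w \<in> pres_word R w"
  unfolding pres_word_def by simp

lemma some_pres_word: "(w, SOME a. a \<in> pres_word R w) \<in> pres_eq R"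
proof -
  have "(SOME a. a \<in> pres_word R w) \<in> pres_word R w" by (rule someI, rule pres_word_mem)
  then show ?thesis unfolding pres_word_def by simp
qed

lemma carrier_pres: "carrier (presented_group R) = range (pres_word R)"
  unfolding presented_group_def quotient_def pres_word_def by auto

lemma one_pres: "\<one>\<^bsub>presented_group R\<^esub> = pres_word R []"
  unfolding presented_group_def by simp

lemma mult_pres: "pres_word R u \<otimes>\<^bsub>presented_group R\<^esub> pres_word R v = pres_word R (u @ v)"
proof -
  have "(u @ v, (SOME a. a \<in> pres_word R u) @ (SOME a. a \<in> pres_word R v)) \<in> pres_eq R"
    by (rule pres_eq_app; rule some_pres_word)
  then show ?thesis unfolding presented_group_def
    by (simp add: pres_word_eq_iff pres_eq_sym)
qed

definition winv :: "'a word \<Rightarrow> 'a word" where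
  "winv w = rev (map inv_letter w)"

lemma winv_cancel: "(winv w @ w, []) \<in> pres_eq R"
proof (induction w)
  case Nil then show ?case by (simp add: winv_def)
next
  case (Cons l w)
  have "(winv w @ [inv_letter l, inv_letter (inv_letter l)] @ w, winv w @ w) \<in> pres_step R"
    unfolding pres_step_def by blast
  moreover have "inv_letter (inv_letter l) = l" by (simp add: inv_letter_def)
  ultimately have "(winv (l # w) @ l # w, winv w @ w) \<in> pres_eq R"
    unfolding pres_eq_def winv_def by auto
  then show ?case using Cons.IH by (rule pres_eq_trans)
qed

lemma presented_group_is_group: "group (presented_group R)"
proof (rule groupI)
  fix x y assume "x \<in> carrier (presented_group R)" "y \<in> carrier (presented_group R)"
  then show "x \<otimes>\<^bsub>presented_group R\<^esub> y \<in> carrier (presented_group R)"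
    by (auto simp: carrier_pres mult_pres)
next
  show "\<one>\<^bsub>presented_group R\<^esub> \<in> carrier (presented_group R)"
    by (simp add: carrier_pres one_pres)
next
  fix x y z assume "x \<in> carrier (presented_group R)" "y \<in> carrier (presented_group R)"
    "z \<in> carrier (presented_group R)"
  then show "x \<otimes>\<^bsub>presented_group R\<^esub> y \<otimes>\<^bsub>presented_group R\<^esub> z =
             x \<otimes>\<^bsub>presented_group R\<^esub> (y \<otimes>\<^bsub>presented_group R\<^esub> z)"
    by (auto simp: carrier_pres mult_pres)
next
  fix x assume "x \<in> carrier (presented_group R)"
  then show "\<one>\<^bsub>presented_group R\<^esub> \<otimes>\<^bsub>presented_group R\<^esub> x = x"
    by (auto simp: carrier_pres mult_pres one_pres)
next
  fix x assume "x \<in> carrier (presented_group R)"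
  then obtain w where w: "x = pres_word R w" by (auto simp: carrier_pres)
  have "pres_word R (winv w) \<otimes>\<^bsub>presented_group R\<^esub> x = \<one>\<^bsub>presented_group R\<^esub>"
    using winv_cancel[of w R] by (simp add: w mult_pres one_pres pres_word_eq_iff)
  then show "\<exists>y\<in>carrier (presented_group R). y \<otimes>\<^bsub>presented_group R\<^esub> x = \<one>\<^bsub>presented_group R\<^esub>"
    by (auto simp: carrier_pres)
qed



fun evalw :: "('g, 'm) monoid_scheme \<Rightarrow> ('a \<Rightarrow> 'g) \<Rightarrow> 'a word \<Rightarrow> 'g" where
  "evalw H f [] = \<one>\<^bsub>H\<^esub>"
| "evalw H f (l # w) = (if fst l then inv\<^bsub>H\<^esub> (f (snd l)) else f (snd l)) \<otimes>\<^bsub>H\<^esub> evalw H f w"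

definition lift :: "('g, 'm) monoid_scheme \<Rightarrow> 'b word set \<Rightarrow> ('b \<Rightarrow> 'g) \<Rightarrow> 'b word set \<Rightarrow> 'g" where
  "lift H R f A = evalw H f (SOME w. w \<in> A)"

context group
begin

lemma evalw_closed: "(\<And>a. f a \<in> carrier G) \<Longrightarrow> evalw G f w \<in> carrier G"
  by (induction w) auto

lemma evalw_append: "(\<And>a. f a \<in> carrier G) \<Longrightarrow> evalw G f (u @ v) = evalw G f u \<otimes> evalw G f v"
  by (induction u) (auto simp: evalw_closed m_assoc)

lemma evalw_cancel: "(\<And>a. f a \<in> carrier G) \<Longrightarrow> evalw G f [l, inv_letter l] = \<one>"
  by (cases l) (auto simp: inv_letter_def)

lemma evalw_step:
  assumes f: "\<And>a. f a \<in> carrier G" and R: "\<And>r. r \<in> R \<Longrightarrow> evalw G f r = \<one>"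
    and "(u, v) \<in> pres_step R"
  shows "evalw G f u = evalw G f v"
proof -
  from assms(3) consider (a) a l b where "u = a @ [l, inv_letter l] @ b" "v = a @ b"
    | (b) a r b where "u = a @ r @ b" "v = a @ b" "r \<in> R"
    unfolding pres_step_def by blast
  then show ?thesis
  proof cases
    case a then show ?thesis
      by (simp only: evalw_append[OF f] evalw_cancel[OF f]) (simp add: evalw_closed f)
  next
    case b then show ?thesis
      by (simp only: evalw_append[OF f] R) (simp add: evalw_closed f)
  qed
qed

lemma evalw_eq:
  assumes f: "\<And>a. f a \<in> carrier G" and R: "\<And>r. r \<in> R \<Longrightarrow> evalw G f r = \<one>"
    and "(u, v) \<in> pres_eq R"
  shows "evalw G f u = evalw G f v"
  using assms(3) unfolding pres_eq_def
proof (induction rule: rtrancl_induct)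
  case base then show ?case by simp
next
  case (step y z)
  have "evalw G f y = evalw G f z"
    using step(2) evalw_step[OF f R, where u=y and v=z] evalw_step[OF f R, where u=z and v=y] by auto
  then show ?case using step(3) by simp
qed


lemma lift_word:
  assumes f: "\<And>a. f a \<in> carrier G" and R: "\<And>r. r \<in> R \<Longrightarrow> evalw G f r = \<one>"
  shows "lift G R f (pres_word R w) = evalw G f w"
  unfolding lift_def using evalw_eq[OF f R some_pres_word[of w R]] by simp

lemma lift_hom:
  assumes f: "\<And>a. f a \<in> carrier G" and R: "\<And>r. r \<in> R \<Longrightarrow> evalw G f r = \<one>"
  shows "lift G R f \<in> hom (presented_group R) G"
  by (rule homI) (auto simp: carrier_pres mult_pres lift_word[OF f R] evalw_closed[OF f] evalw_append[OF f])

end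

definition gen :: "'a word set \<Rightarrow> 'a \<Rightarrow> 'a word set" where
  "gen R a = pres_word R [(False, a)]"

lemma gen_carrier: "gen R a \<in> carrier (presented_group R)"
  by (simp add: gen_def carrier_pres)

lemma inv_gen: "inv\<^bsub>presented_group R\<^esub> (gen R a) = pres_word R [(True, a)]"
proof -
  interpret P: group "presented_group R" by (rule presented_group_is_group)
  have "(winv [(False, a)] @ [(False, a)], []) \<in> pres_eq R" by (rule winv_cancel)
  then have "pres_word R [(True, a)] \<otimes>\<^bsub>presented_group R\<^esub> gen R a = \<one>\<^bsub>presented_group R\<^esub>"
    by (simp add: gen_def mult_pres one_pres pres_word_eq_iff winv_def inv_letter_def)
  then show ?thesis
    by (intro P.inv_equality) (auto simp: gen_def carrier_pres)
qed

lemma inv_gen': "inv\<^bsub>presented_group R\<^esub> (pres_word R [(False, a)]) = pres_word R [(True, a)]"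
  using inv_gen[of R a] by (simp add: gen_def)

lemma evalw_hom:
  assumes "group H" "h \<in> hom (presented_group R) H"
  shows "h (pres_word R w) = evalw H (\<lambda>a. h (gen R a)) w"
proof -
  interpret P: group "presented_group R" by (rule presented_group_is_group)
  interpret hh: group_hom "presented_group R" H h
    using assms by (simp add: group_hom_def group_hom_axioms_def P.group_axioms)
  show ?thesis
  proof (induction w)
    case Nil then show ?case by (simp flip: one_pres)
  next
    case (Cons l w)
    obtain b a where l: "l = (b, a)" by force
    have "pres_word R (l # w) = pres_word R [l] \<otimes>\<^bsub>presented_group R\<^esub> pres_word R w"
      by (simp add: mult_pres)
    moreover have "h (pres_word R [l]) = (if b then inv\<^bsub>H\<^esub> (h (gen R a)) else h (gen R a))"
      using hh.hom_inv[OF gen_carrier, of a] by (auto simp: l inv_gen' gen_def)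
    ultimately show ?case using Cons
      by (simp add: l carrier_pres)
  qed
qed

lemma evalw_gen: "evalw (presented_group R) (gen R) w = pres_word R w"
proof (induction w)
  case Nil then show ?case by (simp add: one_pres)
next
  case (Cons l w)
  obtain b a where l: "l = (b, a)" by force
  have "pres_word R (l # w) = pres_word R [l] \<otimes>\<^bsub>presented_group R\<^esub> pres_word R w"
    by (simp add: mult_pres)
  then show ?case using Cons by (auto simp: l inv_gen' gen_def)
qed

lemma hom_unique:
  assumes "group H" "h1 \<in> hom (presented_group R) H" "h2 \<in> hom (presented_group R) H"
    and "\<And>a. h1 (gen R a) = h2 (gen R a)" and "x \<in> carrier (presented_group R)"
  shows "h1 x = h2 x"
proof -
  obtain w where "x = pres_word R w" using assms(5) by (auto simp: carrier_pres)
  then show ?thesis using evalw_hom[OF assms(1) assms(2)] evalw_hom[OF assms(1) assms(3)] assms(4)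
    by simp
qed

lemma rel_trivial: "r \<in> R \<Longrightarrow> pres_word R r = \<one>\<^bsub>presented_group R\<^esub>"
proof -
  assume "r \<in> R"
  then have "([] @ r @ [], [] @ []) \<in> pres_step R" unfolding pres_step_def by blast
  then have "(r, []) \<in> pres_eq R" unfolding pres_eq_def by auto
  then show ?thesis by (simp add: one_pres pres_word_eq_iff)
qed



lemma factor_through:
  assumes G: "group G" and H: "group H" and N: "N \<lhd> G" and h: "h \<in> hom G H"
    and ker: "\<And>g. g \<in> N \<Longrightarrow> h g = \<one>\<^bsub>H\<^esub>"
  obtains h' where "h' \<in> hom (G Mod N) H" "\<And>g. g \<in> carrier G \<Longrightarrow> h' (N #>\<^bsub>G\<^esub> g) = h g"
proof -
  interpret G: group G by (rule G)
  interpret H: group H by (rule H)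
  interpret N: normal N G by (rule N)
  have "h x = h y" if xy: "x \<in> carrier G" "y \<in> carrier G" "N #>\<^bsub>G\<^esub> x = N #>\<^bsub>G\<^esub> y" for x y
  proof -
    have "y \<in> N #>\<^bsub>G\<^esub> x" using G.rcos_self[OF xy(2) N.subgroup_axioms] xy(3) by simp
    then obtain m where m: "m \<in> N" "y = m \<otimes>\<^bsub>G\<^esub> x" unfolding r_coset_def by auto
    then have "h y = h m \<otimes>\<^bsub>H\<^esub> h x" using h xy N.subset by (auto simp: hom_mult)
    then show ?thesis using ker[OF m(1)] h xy by (simp add: hom_in_carrier)
  qed
  then show ?thesis using FactGroup_universal[OF h N] that by blast
qed

lemma iso_by_inverse:
  assumes "f \<in> hom A B" "g \<in> hom B A" "\<And>x. x \<in> carrier A \<Longrightarrow> g (f x) = x"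
    "\<And>y. y \<in> carrier B \<Longrightarrow> f (g y) = y"
  shows "f \<in> iso A B"
  unfolding iso_def
proof (intro CollectI conjI assms(1))
  show "bij_betw f (carrier A) (carrier B)"
    by (rule bij_betw_byWitness[where f'=g]) (use assms in \<open>auto simp: hom_in_carrier\<close>)
qed

lemma derived_kernel:
  assumes G: "group G" and H: "comm_group H" and h: "h \<in> hom G H" and g: "g \<in> derived G (carrier G)"
  shows "h g = \<one>\<^bsub>H\<^esub>"
proof -
  interpret G: group G by (rule G)
  interpret H: comm_group H by (rule H)
  interpret hh: group_hom G H h using h by (simp add: group_hom_def group_hom_axioms_def G.group_axioms H.group_axioms)
  have "derived_set G (carrier G) \<subseteq> kernel G H h"
  proof
    fix x assume "x \<in> derived_set G (carrier G)"
    then obtain a b where ab: "a \<in> carrier G" "b \<in> carrier G" "x = a \<otimes>\<^bsub>G\<^esub> b \<otimes>\<^bsub>G\<^esub> inv\<^bsub>G\<^esub> a \<otimes>\<^bsub>G\<^esub> inv\<^bsub>G\<^esub> b"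
      by auto
    have "h x = h a \<otimes>\<^bsub>H\<^esub> h b \<otimes>\<^bsub>H\<^esub> inv\<^bsub>H\<^esub> (h a) \<otimes>\<^bsub>H\<^esub> inv\<^bsub>H\<^esub> (h b)"
      using ab by simp
    also have "\<dots> = \<one>\<^bsub>H\<^esub>" using ab
      by (metis H.inv_closed H.l_inv H.m_assoc H.m_comm H.m_closed H.r_one hh.hom_closed)
    finally show "x \<in> kernel G H h" using ab by (simp add: kernel_def)
  qed
  then have "derived G (carrier G) \<subseteq> kernel G H h"
    unfolding derived_def using G.generate_subgroup_incl hh.subgroup_kernel by blast
  with g show ?thesis by (auto simp: kernel_def)
qed

lemma normal_closure_normal:
  assumes G: "group G" and S: "S \<subseteq> carrier G"
  shows "normal_closure G S \<lhd> G"
proof -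
  interpret G: group G by (rule G)
  let ?T = "{g \<otimes>\<^bsub>G\<^esub> s \<otimes>\<^bsub>G\<^esub> inv\<^bsub>G\<^esub> g | g s. g \<in> carrier G \<and> s \<in> S}"
  show ?thesis unfolding normal_closure_def
  proof (rule G.normal_generateI)
    show "?T \<subseteq> carrier G" using S by auto
  next
    fix h g assume "h \<in> ?T" "g \<in> carrier G"
    then obtain g' s where gs: "g' \<in> carrier G" "s \<in> S" "h = g' \<otimes>\<^bsub>G\<^esub> s \<otimes>\<^bsub>G\<^esub> inv\<^bsub>G\<^esub> g'" by auto
    have "g \<otimes>\<^bsub>G\<^esub> h \<otimes>\<^bsub>G\<^esub> inv\<^bsub>G\<^esub> g = (g \<otimes>\<^bsub>G\<^esub> g') \<otimes>\<^bsub>G\<^esub> s \<otimes>\<^bsub>G\<^esub> inv\<^bsub>G\<^esub> (g \<otimes>\<^bsub>G\<^esub> g')"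
      using gs \<open>g \<in> carrier G\<close> S by (auto simp: G.m_assoc G.inv_mult_group)
    then show "g \<otimes>\<^bsub>G\<^esub> h \<otimes>\<^bsub>G\<^esub> inv\<^bsub>G\<^esub> g \<in> ?T" using gs \<open>g \<in> carrier G\<close> by blast
  qed
qed

lemma normal_closure_incl: "s \<in> S \<Longrightarrow> group G \<Longrightarrow> s \<in> carrier G \<Longrightarrow> s \<in> normal_closure G S"
proof -
  assume a: "s \<in> S" "group G" "s \<in> carrier G"
  interpret G: group G by (rule a(2))
  have "s = \<one>\<^bsub>G\<^esub> \<otimes>\<^bsub>G\<^esub> s \<otimes>\<^bsub>G\<^esub> inv\<^bsub>G\<^esub> \<one>\<^bsub>G\<^esub>" using a by simp
  then show ?thesis unfolding normal_closure_def using a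
    by (intro generate.incl) blast
qed

lemma normal_closure_min:
  assumes G: "group G" and K: "K \<lhd> G" and S: "S \<subseteq> K"
  shows "normal_closure G S \<subseteq> K"
proof -
  interpret G: group G by (rule G)
  interpret K: normal K G by (rule K)
  show ?thesis unfolding normal_closure_def
    by (rule G.generate_subgroup_incl[OF _ K.subgroup_axioms]) (use S K.inv_op_closed2 in auto)
qed



definition cword :: "gen word" where "cword = xw @ yw @ xw @ yinvw"
definition r1word :: "nat \<Rightarrow> gen word" where "r1word n = pow_word GX (int n) @ pow_word GY (-2)"
definition blk :: "int \<times> int \<Rightarrow> gen word" where
  "blk p = pow_word GX (fst p) @ yw @ pow_word GX (snd p) @ yinvw"
definition Wword :: "int list \<Rightarrow> int list \<Rightarrow> gen word" where
  "Wword ns ms = concat (map blk (zip (ns @ [1 - sum_list ns]) (ms @ [1 - sum_list ms])))"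

lemma P_rels_eq: "P_rels n ns ms = {r1word n, Wword ns ms}"
  unfolding P_rels_def Let_def r1word_def Wword_def blk_def
  by (simp add: case_prod_beta')

lemma Q_rels_eq: "Q_rels n = {r1word n, cword}"
  unfolding Q_rels_def r1word_def cword_def by simp

lemma sum_zip_diff: "length (xs::int list) = length ys \<Longrightarrow>
    (\<Sum>p\<leftarrow>zip xs ys. fst p - snd p) = sum_list xs - sum_list ys"
  by (induction xs ys rule: list_induct2) auto

lemma sum_zip_add: "length (xs::int list) = length ys \<Longrightarrow>
    (\<Sum>p\<leftarrow>zip xs ys. fst p + snd p) = sum_list xs + sum_list ys"
  by (induction xs ys rule: list_induct2) auto

context group
begin

lemma evalw_replF: "evalw G f (replicate k (False, a)) = f a [^] k"
  if "f a \<in> carrier G"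
  using that by (induction k) (auto, metis nat_pow_Suc nat_pow_Suc2)

lemma evalw_replT: "evalw G f (replicate k (True, a)) = inv (f a [^] k)"
  if "f a \<in> carrier G"
  using that by (induction k) (auto simp: inv_mult_group)

lemma evalw_pow: "f a \<in> carrier G \<Longrightarrow> evalw G f (pow_word a z) = f a [^] z"
proof (cases "0 \<le> z")
  case True
  assume fa: "f a \<in> carrier G"
  have "evalw G f (pow_word a z) = f a [^] nat z"
    using True fa by (simp add: pow_word_def evalw_replF)
  then show ?thesis using pow_nat[OF True] by simp
next
  case False
  assume fa: "f a \<in> carrier G"
  have "evalw G f (pow_word a z) = inv (f a [^] nat (- z))"
    using False fa by (simp add: pow_word_def evalw_replT)
  then show ?thesis using False by (simp add: int_pow_def2[of _ _ z])
qed

lemma evalw_concat_pow: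
  assumes f: "\<And>a. f a \<in> carrier G" and Xg: "Xg \<in> carrier G"
    and "\<And>p. p \<in> set zs \<Longrightarrow> evalw G f (F p) = Xg [^] (c p :: int)"
  shows "evalw G f (concat (map F zs)) = Xg [^] (\<Sum>p\<leftarrow>zs. c p)"
  using assms(3)
proof (induction zs)
  case Nil then show ?case by simp
next
  case (Cons p zs)
  then show ?case by (simp add: evalw_append[OF f] int_pow_mult[OF Xg])
qed

lemma evalw_blk:
  assumes f: "\<And>a. f a \<in> carrier G"
  shows "evalw G f (blk p) = f GX [^] fst p \<otimes> (f GY \<otimes> f GX [^] snd p \<otimes> inv (f GY))"
  by (simp add: blk_def evalw_append[OF f] evalw_pow[OF f] xw_def yw_def yinvw_def evalw_closed[OF f] f m_assoc)

lemma evalw_cword: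
  assumes f: "\<And>a. f a \<in> carrier G"
  shows "evalw G f cword = f GX \<otimes> f GY \<otimes> f GX \<otimes> inv (f GY)"
  by (simp add: cword_def xw_def yw_def yinvw_def f m_assoc)

lemma inv_cancel_l: "a \<in> carrier G \<Longrightarrow> z \<in> carrier G \<Longrightarrow> inv a \<otimes> (a \<otimes> z) = z"
  by (simp add: m_assoc[symmetric])

lemma conj_hom: "Yg \<in> carrier G \<Longrightarrow> (\<lambda>g. Yg \<otimes> g \<otimes> inv Yg) \<in> hom G G"
  by (rule homI) (simp_all add: m_assoc inv_cancel_l)

lemma conj_pow:
  assumes Xg: "Xg \<in> carrier G" and Yg: "Yg \<in> carrier G"
  shows "Yg \<otimes> Xg [^] (b::int) \<otimes> inv Yg = (Yg \<otimes> Xg \<otimes> inv Yg) [^] b"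
  using hom_int_pow[OF conj_hom[OF Yg] Xg is_group is_group, of b] by (simp only:)

lemma W_conj:
  assumes f: "\<And>a. f a \<in> carrier G" and c: "evalw G f cword = \<one>"
    and len: "length ms = length ns"
  shows "evalw G f (Wword ns ms) = \<one>"
proof -
  let ?Xg = "f GX" and ?Yg = "f GY"
  have X: "?Xg \<in> carrier G" and Y: "?Yg \<in> carrier G" using f by auto
  have "?Xg \<otimes> ?Yg \<otimes> ?Xg \<otimes> inv ?Yg = \<one>" using c evalw_cword[OF f] by simp
  then have "?Xg \<otimes> (?Yg \<otimes> ?Xg \<otimes> inv ?Yg) = \<one>" using X Y by (simp only: m_assoc m_closed inv_closed)
  then have "(?Yg \<otimes> ?Xg \<otimes> inv ?Yg) \<otimes> ?Xg = \<one>" by (rule inv_comm) (use X Y in auto)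
  then have YX: "?Yg \<otimes> ?Xg \<otimes> inv ?Yg = inv ?Xg" by (rule inv_equality[symmetric]) (use X Y in auto)
  have "evalw G f (blk p) = ?Xg [^] (fst p - snd p)" for p
  proof -
    have "?Yg \<otimes> ?Xg [^] snd p \<otimes> inv ?Yg = inv (?Xg [^] snd p)"
      using conj_pow[OF X Y, of "snd p"] YX int_pow_inv[OF X, of "snd p"] by simp
    then show ?thesis using evalw_blk[OF f, where p=p] int_pow_diff[OF X, of "fst p" "snd p"] by simp
  qed
  then have "evalw G f (Wword ns ms) = ?Xg [^] (\<Sum>p\<leftarrow>zip (ns @ [1 - sum_list ns]) (ms @ [1 - sum_list ms]). fst p - snd p)"
    unfolding Wword_def by (rule evalw_concat_pow[OF f f])
  also have "\<dots> = \<one>" using len by (subst sum_zip_diff) auto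
  finally show ?thesis .
qed

end

context comm_group
begin

lemma W_comm:
  assumes f: "\<And>a. f a \<in> carrier G" and len: "length ms = length ns"
  shows "evalw G f (Wword ns ms) = f GX [^] (2::int)"
proof -
  let ?Xg = "f GX" and ?Yg = "f GY"
  have "evalw G f (blk p) = ?Xg [^] (fst p + snd p)" for p
  proof -
    have "?Yg \<otimes> ?Xg [^] snd p \<otimes> inv ?Yg = ?Xg [^] snd p"
      using f by (simp add: m_comm[of ?Yg "?Xg [^] snd p"] m_assoc)
    then show ?thesis using f by (simp add: evalw_blk int_pow_mult)
  qed
  then have "evalw G f (Wword ns ms) = ?Xg [^] (\<Sum>p\<leftarrow>zip (ns @ [1 - sum_list ns]) (ms @ [1 - sum_list ms]). fst p + snd p)"
    unfolding Wword_def by (rule evalw_concat_pow[OF f f])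
  also have "\<dots> = ?Xg [^] (2::int)" using len by (subst sum_zip_add) auto
  finally show ?thesis .
qed

lemma c_comm:
  assumes f: "\<And>a. f a \<in> carrier G"
  shows "evalw G f cword = f GX [^] (2::int)"
proof -
  have "f GX [^] ((1::int) + 1) = f GX \<otimes> f GX" using f int_pow_mult[of "f GX" 1 1] by simp
  then have "f GX [^] (2::int) = f GX \<otimes> f GX" by simp
  moreover have "f GX \<otimes> f GY \<otimes> f GX \<otimes> inv (f GY) = f GX \<otimes> f GX"
    using f by (simp add: m_comm[of "f GY" "f GX"] m_assoc)
  ultimately show ?thesis using f by (simp add: evalw_cword)
qed

end



lemma idhom: "group H \<Longrightarrow> id \<in> hom H H"
  by (rule homI) auto

lemma compose_app: "x \<in> A \<Longrightarrow> compose A g f x = g (f x)"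
  by (simp add: compose_def)

lemma main_i:
  fixes n :: nat and ns ms :: "int list"
  assumes len: "length ms = length ns"
  defines "N \<equiv> normal_closure (presented_group (P_rels n ns ms)) {pres_word (P_rels n ns ms) cword}"
  shows "\<exists>\<phi>. \<phi> \<in> iso (presented_group (P_rels n ns ms) Mod N) (presented_group (Q_rels n))
            \<and> \<phi> (N #>\<^bsub>presented_group (P_rels n ns ms)\<^esub> pres_word (P_rels n ns ms) xw) = pres_word (Q_rels n) xw
            \<and> \<phi> (N #>\<^bsub>presented_group (P_rels n ns ms)\<^esub> pres_word (P_rels n ns ms) yw) = pres_word (Q_rels n) yw"
proof -
  let ?PR = "P_rels n ns ms" and ?QR = "Q_rels n"
  let ?G = "presented_group ?PR" and ?Q = "presented_group ?QR"
  interpret G: group ?G by (rule presented_group_is_group)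
  interpret Q: group ?Q by (rule presented_group_is_group)
  have PR: "?PR = {r1word n, Wword ns ms}" by (rule P_rels_eq)
  have QR: "?QR = {r1word n, cword}" by (rule Q_rels_eq)
  define s where "s = pres_word ?PR cword"
  have s_car: "s \<in> carrier ?G" by (simp add: s_def carrier_pres)
  have Nn: "N \<lhd> ?G" unfolding N_def s_def[symmetric]
    by (rule normal_closure_normal) (use s_car G.group_axioms in auto)
  have sN: "s \<in> N" unfolding N_def s_def[symmetric]
    by (rule normal_closure_incl) (auto simp: s_car G.group_axioms)
  interpret N: normal N ?G by (rule Nn)
  interpret GN: group "?G Mod N" by (rule N.factorgroup_is_group)
  have gG: "gen ?PR a \<in> carrier ?G" for a by (rule gen_carrier)
  have fQ: "\<And>a. gen ?QR a \<in> carrier ?Q" by (rule gen_carrier)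
  have evQ: "evalw ?Q (gen ?QR) w = pres_word ?QR w" for w by (rule evalw_gen)
  have Qrel: "pres_word ?QR r = \<one>\<^bsub>?Q\<^esub>" if "r \<in> ?QR" for r using that by (rule rel_trivial)
  have Prel: "pres_word ?PR r = \<one>\<^bsub>?G\<^esub>" if "r \<in> ?PR" for r using that by (rule rel_trivial)
  have relPQ: "evalw ?Q (gen ?QR) r = \<one>\<^bsub>?Q\<^esub>" if "r \<in> ?PR" for r
  proof -
    from that PR have "r = r1word n \<or> r = Wword ns ms" by auto
    then show ?thesis
    proof
      assume "r = r1word n" then show ?thesis using evQ Qrel QR by auto
    next
      assume r: "r = Wword ns ms"
      have "evalw ?Q (gen ?QR) cword = \<one>\<^bsub>?Q\<^esub>" using evQ Qrel QR by auto
      then show ?thesis using Q.W_conj[OF fQ _ len] r by simp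
    qed
  qed
  define \<psi> where "\<psi> = lift ?Q ?PR (gen ?QR)"
  have \<psi>hom: "\<psi> \<in> hom ?G ?Q" unfolding \<psi>_def by (rule Q.lift_hom[OF fQ relPQ])
  have \<psi>w: "\<psi> (pres_word ?PR w) = pres_word ?QR w" for w
    unfolding \<psi>_def using Q.lift_word[OF fQ relPQ, where R="?PR"] evQ by simp
  have \<psi>gen: "\<psi> (gen ?PR a) = gen ?QR a" for a
    using \<psi>w[of "[(False, a)]"] by (simp add: gen_def)
  interpret \<psi>: group_hom ?G ?Q \<psi>
    using \<psi>hom by (simp add: group_hom_def group_hom_axioms_def G.group_axioms Q.group_axioms)
  have "N \<subseteq> kernel ?G ?Q \<psi>" unfolding N_def s_def[symmetric]
  proof (rule normal_closure_min[OF G.group_axioms \<psi>.normal_kernel])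
    show "{s} \<subseteq> kernel ?G ?Q \<psi>" using s_car \<psi>w[of cword] Qrel QR by (auto simp: kernel_def s_def)
  qed
  then have ker: "\<And>g. g \<in> N \<Longrightarrow> \<psi> g = \<one>\<^bsub>?Q\<^esub>" by (auto simp: kernel_def)
  obtain \<phi> where \<phi>hom: "\<phi> \<in> hom (?G Mod N) ?Q" and \<phi>: "\<And>g. g \<in> carrier ?G \<Longrightarrow> \<phi> (N #>\<^bsub>?G\<^esub> g) = \<psi> g"
    using factor_through[OF G.group_axioms Q.group_axioms Nn \<psi>hom ker] by blast
  let ?fN = "\<lambda>a. N #>\<^bsub>?G\<^esub> gen ?PR a"
  have fN: "\<And>a. ?fN a \<in> carrier (?G Mod N)" using gG by (auto simp: carrier_FactGroup)
  have projhom: "(\<lambda>g. N #>\<^bsub>?G\<^esub> g) \<in> hom ?G (?G Mod N)" by (rule N.r_coset_hom_Mod)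
  have evN: "evalw (?G Mod N) ?fN w = N #>\<^bsub>?G\<^esub> pres_word ?PR w" for w
    using evalw_hom[OF GN.group_axioms projhom] by simp
  have relQN: "evalw (?G Mod N) ?fN r = \<one>\<^bsub>?G Mod N\<^esub>" if "r \<in> ?QR" for r
  proof -
    from that QR have "r = r1word n \<or> r = cword" by auto
    then show ?thesis
    proof
      assume "r = r1word n"
      then show ?thesis using evN Prel[of "r1word n"] PR N.rcos_const[OF G.group_axioms N.one_closed] by simp
    next
      assume "r = cword"
      then show ?thesis using evN N.rcos_const[OF G.group_axioms sN] by (simp add: s_def)
    qed
  qed
  define \<chi> where "\<chi> = lift (?G Mod N) ?QR ?fN"
  have \<chi>hom: "\<chi> \<in> hom ?Q (?G Mod N)" unfolding \<chi>_def by (rule GN.lift_hom[OF fN relQN])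
  have \<chi>gen: "\<chi> (gen ?QR a) = N #>\<^bsub>?G\<^esub> gen ?PR a" for a
    unfolding \<chi>_def gen_def[of ?QR] using GN.lift_word[OF fN relQN, where R="?QR" and w="[(False, a)]"] GN.r_one[OF fN[of a]] by simp
  have \<phi>\<chi>: "\<phi> (\<chi> q) = q" if q: "q \<in> carrier ?Q" for q
  proof -
    have gens: "(\<phi> \<circ> \<chi>) (gen ?QR a) = id (gen ?QR a)" for a
    proof -
      have "(\<phi> \<circ> \<chi>) (gen ?QR a) = \<phi> (\<chi> (gen ?QR a))" by simp
      also have "\<dots> = gen ?QR a" using \<chi>gen \<phi>[OF gG] \<psi>gen by simp
      finally show ?thesis by simp
    qed
    have "(\<phi> \<circ> \<chi>) q = id q"
      by (rule hom_unique[OF Q.group_axioms hom_compose[OF \<chi>hom \<phi>hom] idhom[OF Q.group_axioms] gens q])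
    then show ?thesis using o_apply by simp
  qed
  have \<chi>\<phi>: "\<chi> (\<phi> Xc) = Xc" if Xc: "Xc \<in> carrier (?G Mod N)" for Xc
  proof -
    obtain g where g: "g \<in> carrier ?G" "Xc = N #>\<^bsub>?G\<^esub> g" using Xc by (auto simp: carrier_FactGroup)
    have gens: "(\<chi> \<circ> \<psi>) (gen ?PR a) = N #>\<^bsub>?G\<^esub> gen ?PR a" for a
    proof -
      have "(\<chi> \<circ> \<psi>) (gen ?PR a) = \<chi> (\<psi> (gen ?PR a))" by simp
      also have "\<dots> = N #>\<^bsub>?G\<^esub> gen ?PR a" using \<chi>gen \<psi>gen by simp
      finally show ?thesis .
    qed
    have "(\<chi> \<circ> \<psi>) g = N #>\<^bsub>?G\<^esub> g"
      using hom_unique[OF GN.group_axioms hom_compose[OF \<psi>hom \<chi>hom] projhom gens g(1)] by simp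
    then show ?thesis using o_apply g \<phi>[OF g(1)] by simp
  qed
  have "\<phi> \<in> iso (?G Mod N) ?Q" by (rule iso_by_inverse[OF \<phi>hom \<chi>hom \<chi>\<phi> \<phi>\<chi>])
  moreover have "\<phi> (N #>\<^bsub>?G\<^esub> pres_word ?PR xw) = pres_word ?QR xw"
    using \<phi>[OF gG[of GX]] \<psi>gen[of GX] by (simp add: gen_def xw_def)
  moreover have "\<phi> (N #>\<^bsub>?G\<^esub> pres_word ?PR yw) = pres_word ?QR yw"
    using \<phi>[OF gG[of GY]] \<psi>gen[of GY] by (simp add: gen_def yw_def)
  ultimately show ?thesis by blast
qed

lemma main_ii:
  fixes n :: nat and ns ms :: "int list"
  assumes len: "length ms = length ns"
  shows "(presented_group (P_rels n ns ms) Mod derived (presented_group (P_rels n ns ms)) (carrier (presented_group (P_rels n ns ms))))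
     \<cong> (presented_group (Q_rels n) Mod derived (presented_group (Q_rels n)) (carrier (presented_group (Q_rels n))))"
proof -
  let ?PR = "P_rels n ns ms" and ?QR = "Q_rels n"
  let ?G = "presented_group ?PR" and ?Q = "presented_group ?QR"
  let ?DG = "derived ?G (carrier ?G)" and ?DQ = "derived ?Q (carrier ?Q)"
  interpret G: group ?G by (rule presented_group_is_group)
  interpret Q: group ?Q by (rule presented_group_is_group)
  interpret AG: comm_group "?G Mod ?DG" by (rule G.derived_quot_is_comm_group)
  interpret AQ: comm_group "?Q Mod ?DQ" by (rule Q.derived_quot_is_comm_group)
  interpret DG: normal ?DG ?G by (rule G.derived_self_is_normal)
  interpret DQ: normal ?DQ ?Q by (rule Q.derived_self_is_normal)
  have PR: "?PR = {r1word n, Wword ns ms}" by (rule P_rels_eq)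
  have QR: "?QR = {r1word n, cword}" by (rule Q_rels_eq)
  have gG: "gen ?PR a \<in> carrier ?G" for a by (rule gen_carrier)
  have gQ: "gen ?QR a \<in> carrier ?Q" for a by (rule gen_carrier)
  have Qrel: "pres_word ?QR r = \<one>\<^bsub>?Q\<^esub>" if "r \<in> ?QR" for r using that by (rule rel_trivial)
  have Prel: "pres_word ?PR r = \<one>\<^bsub>?G\<^esub>" if "r \<in> ?PR" for r using that by (rule rel_trivial)
  let ?fQ = "\<lambda>a. ?DQ #>\<^bsub>?Q\<^esub> gen ?QR a"
  let ?fG = "\<lambda>a. ?DG #>\<^bsub>?G\<^esub> gen ?PR a"
  have fQ: "\<And>a. ?fQ a \<in> carrier (?Q Mod ?DQ)" using gQ by (auto simp: carrier_FactGroup)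
  have fG: "\<And>a. ?fG a \<in> carrier (?G Mod ?DG)" using gG by (auto simp: carrier_FactGroup)
  have projQ: "(\<lambda>g. ?DQ #>\<^bsub>?Q\<^esub> g) \<in> hom ?Q (?Q Mod ?DQ)" by (rule DQ.r_coset_hom_Mod)
  have projG: "(\<lambda>g. ?DG #>\<^bsub>?G\<^esub> g) \<in> hom ?G (?G Mod ?DG)" by (rule DG.r_coset_hom_Mod)
  have evQ: "evalw (?Q Mod ?DQ) ?fQ w = ?DQ #>\<^bsub>?Q\<^esub> pres_word ?QR w" for w
    using evalw_hom[OF AQ.is_group projQ] by simp
  have evG: "evalw (?G Mod ?DG) ?fG w = ?DG #>\<^bsub>?G\<^esub> pres_word ?PR w" for w
    using evalw_hom[OF AG.is_group projG] by simp
  have oneQ: "?DQ #>\<^bsub>?Q\<^esub> \<one>\<^bsub>?Q\<^esub> = \<one>\<^bsub>?Q Mod ?DQ\<^esub>"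
    using DQ.rcos_const[OF Q.group_axioms DQ.one_closed] by simp
  have oneG: "?DG #>\<^bsub>?G\<^esub> \<one>\<^bsub>?G\<^esub> = \<one>\<^bsub>?G Mod ?DG\<^esub>"
    using DG.rcos_const[OF G.group_axioms DG.one_closed] by simp
  have relPA: "evalw (?Q Mod ?DQ) ?fQ r = \<one>\<^bsub>?Q Mod ?DQ\<^esub>" if "r \<in> ?PR" for r
  proof -
    from that PR have "r = r1word n \<or> r = Wword ns ms" by auto
    then show ?thesis
    proof
      assume "r = r1word n" then show ?thesis using evQ Qrel QR oneQ by auto
    next
      assume r: "r = Wword ns ms"
      have "evalw (?Q Mod ?DQ) ?fQ cword = \<one>\<^bsub>?Q Mod ?DQ\<^esub>" using evQ Qrel QR oneQ by auto
      then show ?thesis using AQ.W_comm[OF fQ len] AQ.c_comm[OF fQ] r by simp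
    qed
  qed
  have relQA: "evalw (?G Mod ?DG) ?fG r = \<one>\<^bsub>?G Mod ?DG\<^esub>" if "r \<in> ?QR" for r
  proof -
    from that QR have "r = r1word n \<or> r = cword" by auto
    then show ?thesis
    proof
      assume "r = r1word n" then show ?thesis using evG Prel PR oneG by auto
    next
      assume r: "r = cword"
      have "evalw (?G Mod ?DG) ?fG (Wword ns ms) = \<one>\<^bsub>?G Mod ?DG\<^esub>" using evG Prel PR oneG by auto
      then show ?thesis using AG.W_comm[OF fG len] AG.c_comm[OF fG] r by simp
    qed
  qed
  define \<alpha>0 where "\<alpha>0 = lift (?Q Mod ?DQ) ?PR ?fQ"
  have \<alpha>0hom: "\<alpha>0 \<in> hom ?G (?Q Mod ?DQ)" unfolding \<alpha>0_def by (rule AQ.lift_hom[OF fQ relPA])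
  have \<alpha>0gen: "\<alpha>0 (gen ?PR a) = ?fQ a" for a
    unfolding \<alpha>0_def gen_def[of ?PR] using AQ.lift_word[OF fQ relPA, where R="?PR" and w="[(False, a)]"] AQ.r_one[OF fQ[of a]] by simp
  define \<beta>0 where "\<beta>0 = lift (?G Mod ?DG) ?QR ?fG"
  have \<beta>0hom: "\<beta>0 \<in> hom ?Q (?G Mod ?DG)" unfolding \<beta>0_def by (rule AG.lift_hom[OF fG relQA])
  have \<beta>0gen: "\<beta>0 (gen ?QR a) = ?fG a" for a
    unfolding \<beta>0_def gen_def[of ?QR] using AG.lift_word[OF fG relQA, where R="?QR" and w="[(False, a)]"] AG.r_one[OF fG[of a]] by simp
  obtain \<alpha> where \<alpha>hom: "\<alpha> \<in> hom (?G Mod ?DG) (?Q Mod ?DQ)" and \<alpha>: "\<And>g. g \<in> carrier ?G \<Longrightarrow> \<alpha> (?DG #>\<^bsub>?G\<^esub> g) = \<alpha>0 g"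
    using factor_through[OF G.group_axioms AQ.is_group G.derived_self_is_normal \<alpha>0hom
        derived_kernel[OF G.group_axioms AQ.comm_group_axioms \<alpha>0hom]] by blast
  obtain \<beta> where \<beta>hom: "\<beta> \<in> hom (?Q Mod ?DQ) (?G Mod ?DG)" and \<beta>: "\<And>g. g \<in> carrier ?Q \<Longrightarrow> \<beta> (?DQ #>\<^bsub>?Q\<^esub> g) = \<beta>0 g"
    using factor_through[OF Q.group_axioms AG.is_group Q.derived_self_is_normal \<beta>0hom
        derived_kernel[OF Q.group_axioms AG.comm_group_axioms \<beta>0hom]] by blast
  have \<alpha>\<beta>: "\<alpha> (\<beta> Yc) = Yc" if Yc: "Yc \<in> carrier (?Q Mod ?DQ)" for Yc
  proof -
    obtain q where q: "q \<in> carrier ?Q" "Yc = ?DQ #>\<^bsub>?Q\<^esub> q" using Yc by (auto simp: carrier_FactGroup)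
    have gens: "(\<alpha> \<circ> \<beta>0) (gen ?QR a) = ?DQ #>\<^bsub>?Q\<^esub> gen ?QR a" for a
    proof -
      have "(\<alpha> \<circ> \<beta>0) (gen ?QR a) = \<alpha> (\<beta>0 (gen ?QR a))" by simp
      also have "\<dots> = ?DQ #>\<^bsub>?Q\<^esub> gen ?QR a" using \<beta>0gen \<alpha>[OF gG] \<alpha>0gen by simp
      finally show ?thesis .
    qed
    have "(\<alpha> \<circ> \<beta>0) q = ?DQ #>\<^bsub>?Q\<^esub> q"
      using hom_unique[OF AQ.is_group hom_compose[OF \<beta>0hom \<alpha>hom] projQ gens q(1)] by simp
    then show ?thesis using q \<beta>[OF q(1)] by simp
  qed
  have \<beta>\<alpha>: "\<beta> (\<alpha> Xc) = Xc" if Xc: "Xc \<in> carrier (?G Mod ?DG)" for Xc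
  proof -
    obtain g where g: "g \<in> carrier ?G" "Xc = ?DG #>\<^bsub>?G\<^esub> g" using Xc by (auto simp: carrier_FactGroup)
    have gens: "(\<beta> \<circ> \<alpha>0) (gen ?PR a) = ?DG #>\<^bsub>?G\<^esub> gen ?PR a" for a
    proof -
      have "(\<beta> \<circ> \<alpha>0) (gen ?PR a) = \<beta> (\<alpha>0 (gen ?PR a))" by simp
      also have "\<dots> = ?DG #>\<^bsub>?G\<^esub> gen ?PR a" using \<alpha>0gen \<beta>[OF gQ] \<beta>0gen by simp
      finally show ?thesis .
    qed
    have "(\<beta> \<circ> \<alpha>0) g = ?DG #>\<^bsub>?G\<^esub> g"
      using hom_unique[OF AG.is_group hom_compose[OF \<alpha>0hom \<beta>hom] projG gens g(1)] by simp
    then show ?thesis using g \<alpha>[OF g(1)] by simp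
  qed
  have "\<alpha> \<in> iso (?G Mod ?DG) (?Q Mod ?DQ)" by (rule iso_by_inverse[OF \<alpha>hom \<beta>hom \<beta>\<alpha> \<alpha>\<beta>])
  then show ?thesis by (rule is_isoI)
qed


theorem proposition3p7:
  fixes n :: nat and ns ms :: "int list"
  assumes "n \<ge> 2" and "length ns \<ge> 1" and "length ms = length ns"
    and "0 \<notin> set ns" and "0 \<notin> set ms"
  defines "G \<equiv> presented_group (P_rels n ns ms)"
    and "Q \<equiv> presented_group (Q_rels n)"
  defines "N \<equiv> normal_closure G {pres_word (P_rels n ns ms) (xw @ yw @ xw @ yinvw)}"
  shows "(\<exists>\<phi>. \<phi> \<in> iso (G Mod N) Q
            \<and> \<phi> (N #>\<^bsub>G\<^esub> pres_word (P_rels n ns ms) xw) = pres_word (Q_rels n) xw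
            \<and> \<phi> (N #>\<^bsub>G\<^esub> pres_word (P_rels n ns ms) yw) = pres_word (Q_rels n) yw)
       \<and> (G Mod derived G (carrier G)) \<cong> (Q Mod derived Q (carrier Q))"
proof -
  have cw: "xw @ yw @ xw @ yinvw = cword" by (simp add: cword_def)
  show ?thesis
    unfolding G_def Q_def N_def cw
    using main_i[OF assms(3)] main_ii[OF assms(3)] by (rule conjI)
qed

end
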